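(* Let $\mathfrak L=\mathbb V\oplus\mathbb W$ be a color gLt-algebra admitting a quasi-multiplicative basis $\mathfrak B=\{e_i\}_{i\in I}$ of $\mathbb W\neq 0$. The relation $\sim$ on $I$ defined by $i\sim j$ if and only if $i$ is connected to $j$ is an equivalence relation.
   Context: Let $\mathbb F$ be a field, $\mathbb G$ an abelian group, $n\ge 2$, and $\epsilon:\mathbb G\times\mathbb G\to\mathbb F\setminus\{0\}$ a bicharacter ($\epsilon(k,g+h)=\epsilon(k,g)\epsilon(k,h)$, $\epsilon(g+h,k)=\epsilon(g,k)\epsilon(h,k)$, $\epsilon(g,h)\epsilon(h,g)=1$). A graded $n$-ary algebra is a $\mathbb G$-graded vector space $\mathfrak L=\bigoplus_{g\in\mathbb G}\mathfrak L_g$ with an $n$-linear map $\langle\cdot,\dots,\cdot\rangle:\mathfrak L^n\to\mathfrak L$ such that $\langle\mathfrak L_{g_1},\dots,\mathfrak L_{g_n}\rangle\subset\mathfrak L_{g_1+\dots+g_n}$. For $\sigma\in\mathbb S_n$ write $\langle x_1,\dots,x_n\rangle_\sigma:=\langle x_{\sigma(1)},\dots,x_{\sigma(n)}\rangle$; for subsets $A_1,\dots,A_n$, $\langle A_1,\dots,A_n\rangle_\sigma$ denotes the linear span of all $\langle x_1,\dots,x_n\rangle_\sigma$ with $x_r\in A_r$. A color gLt-algebra is a graded $n$-ary algebra satisfying, for each $k=1,\dots,n$ and fixed scalars $\alpha^{\sigma_1,\sigma_2}_{i,j,k}\in\mathbb F$, the color version (each term on the right multiplied by the product of values of $\epsilon$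 on the degrees of the homogeneous arguments transposed in passing from the left-hand order to the order of that term) of the identity $\langle y_1,\dots,y_{k-1},\langle x_1,\dots,x_n\rangle,y_k,\dots,y_{n-1}\rangle=\sum_{1\le i,j\le n,\,\sigma_1\in\mathbb S_n,\,\sigma_2\in\mathbb S_{n-1}}\alpha^{\sigma_1,\sigma_2}_{i,j,k}\langle x_{\sigma_1(1)},\dots,x_{\sigma_1(i-1)},\langle y_{\sigma_2(1)},\dots,y_{\sigma_2(j-1)},x_{\sigma_1(i)},y_{\sigma_2(j)},\dots,y_{\sigma_2(n-1)}\rangle,x_{\sigma_1(i+1)},\dots,x_{\sigma_1(n)}\rangle$. $\mathfrak L$ admits a quasi-multiplicative basis if $\mathfrak L=\mathbb V\oplus\mathbb W$ with $\mathbb V$, $\mathbb W\ne0$ graded subspaces and $\mathfrak B=\{e_i\}_{i\in I}$ a basis of homogeneous elements of $\mathbb W$ such that: (1) for $i_1,\dots,i_n\in I$, either $\langle e_{i_1},\dots,e_{i_n}\rangle\in\mathbb Fe_j$ for some $j\in I$ or $\langle e_{i_1},\dots,e_{i_n}\rangle\in\mathbb V$; (2) for $0<k<n$, $i_1,\dots,i_k\in I$ and $\sigma\in\mathbb S_n$, $\langle e_{i_1},\dots,e_{i_k},\mathbb V,\dots,\mathbb V\rangle_\sigma\subset\mathbb Fe_{j_\sigma}$ for some $j_\sigma\in I$; (3) either $\langle\mathbb V,\dots,\mathbb V\rangle\subset\mathbb Fe_j$ for some $j\in I$ or $\langle\mathbb V,\dots,\mathbb V\rangle\subset\mathbb V$.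 Index maps: let $v$ be a symbol not in $I$, $\mathfrak I:=I\,\dot\cup\,\{v\}$; for each $j\in\mathfrak I$ take a new symbol $\overline j$, $\overline I:=\{\overline i:i\in I\}$, $\overline{\mathfrak I}:=\overline I\,\dot\cup\,\{\overline v\}$; set $\overline{(\overline j)}:=j$, $\overline J:=\{\overline j:j\in J\}$ for a set $J$ of symbols ($\overline\emptyset=\emptyset$). Put $u_j:=e_j$ for $j\in I$ and $u_v:=\mathbb V$. For $\sigma\in\mathbb S_n$ and $(j_1,\dots,j_n)\in\mathfrak I^n$ let $a_\sigma(j_1,\dots,j_n)=\{r\}$ if $r\in I$ and $0\ne\langle u_{j_1},\dots,u_{j_n}\rangle_\sigma\subset\mathbb Fe_r$, $=\{v\}$ if $0\ne\langle u_{j_1},\dots,u_{j_n}\rangle_\sigma\subset\mathbb V$, and $=\emptyset$ otherwise. For $j,j_2,\dots,j_n\in\mathfrak I$ let $b_\sigma(j,\overline j_2,\dots,\overline j_n):=\{x\in\mathfrak I: a_\sigma(x,j_2,\dots,j_n)=\{j\}\}$. Define $\mu$ on $(\mathfrak I\,\dot\cup\,\overline{\mathfrak I})\times(\mathfrak I^{n-1}\,\dot\cup\,\overline{\mathfrak I}^{n-1})$ with values subsets of $\mathfrak I$ by: $\mu(j,j_1,\dots,j_{n-1})=\bigcup_{\sigma\in\mathbb S_n}a_\sigma(j,j_1,\dots,j_{n-1})$ for $j,j_1,\dots,j_{n-1}\in\mathfrak I$; $\mu(j,\overline j_1,\dots,\overline j_{n-1})=\bigcup_{\sigma\in\mathbb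 S_n}b_\sigma(j,\overline j_1,\dots,\overline j_{n-1})$ for $j,j_1,\dots,j_{n-1}\in\mathfrak I$; $\mu(\overline j,j_1,\dots,j_{n-1})=\bigcup_{1\le k\le n-1,\ \sigma\in\mathbb S_n}b_\sigma(j_k,\overline j,\overline j_1,\dots,\overline j_{k-1},\overline j_{k+1},\dots,\overline j_{n-1})$ for $j,j_1,\dots,j_{n-1}\in\mathfrak I$; and $\mu(\overline j,\overline j_1,\dots,\overline j_{n-1})=\emptyset$. Define $\phi$ on pairs $(J,X)$ with $J\subset I\,\dot\cup\,\overline I$ and $X\in\mathfrak I^{n-1}\,\dot\cup\,\overline{\mathfrak I}^{n-1}$ by $\phi(\emptyset,X)=\emptyset$ and, for $J\ne\emptyset$, $\phi(J,X):=K\cup\overline K$ where $K:=\big(\bigcup_{j\in J}\mu(j,X)\big)\setminus\{v\}$. Connections: for distinct $i,j\in I$, $i$ is connected to $j$ if there exist $t\ge1$, $X_1,\dots,X_t\in\mathfrak I^{n-1}\,\dot\cup\,\overline{\mathfrak I}^{n-1}$ and $\widetilde i\in\{i,\overline i\}$ such that $\phi(\{\widetilde i\},X_1)\ne\emptyset$, $\phi(\phi(\{\widetilde i\},X_1),X_2)\neq\emptyset$, …, $\phi(\cdots\phi(\{\widetilde i\},X_1)\cdots,X_{t-1})\ne\emptyset$, and $j\in\phi(\cdots\phi(\phi(\{\widetilde i\},X_1),X_2)\cdots,X_t)$. By convention every $i\in I$ is connected to itself. *)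

theory Defs
  imports Main "HOL.Vector_Spaces" "HOL-Combinatorics.Permutations"
begin

definition bicharacter :: "('g::ab_group_add \<Rightarrow> 'g \<Rightarrow> 'k::field) \<Rightarrow> bool" where
  "bicharacter eps \<longleftrightarrow>
     (\<forall>g h. eps g h \<noteq> 0) \<and>
     (\<forall>k g h. eps k (g + h) = eps k g * eps k h) \<and>
     (\<forall>g h k. eps (g + h) k = eps g k * eps h k) \<and>
     (\<forall>g h. eps g h * eps h g = 1)"

definition is_grading :: "('k::field \<Rightarrow> 'v::ab_group_add \<Rightarrow> 'v) \<Rightarrow> ('g \<Rightarrow> 'v set) \<Rightarrow> bool" where
  "is_grading scale Lg \<longleftrightarrow>
     (\<forall>g. module.subspace scale (Lg g)) \<and>
     (\<forall>x. \<exists>f. finite {g. f g \<noteq> 0} \<and> (\<forall>g. f g \<in> Lg g) \<and> x = (\<Sum>g\<in>{g. f g \<noteq> 0}. f g)) \<and>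
     (\<forall>f. finite {g. f g \<noteq> 0} \<and> (\<forall>g. f g \<in> Lg g) \<and> (\<Sum>g\<in>{g. f g \<noteq> 0}. f g) = 0
          \<longrightarrow> (\<forall>g. f g = 0))"

definition graded_subspace :: "('k::field \<Rightarrow> 'v::ab_group_add \<Rightarrow> 'v) \<Rightarrow> ('g \<Rightarrow> 'v set) \<Rightarrow> 'v set \<Rightarrow> bool" where
  "graded_subspace scale Lg S \<longleftrightarrow>
     module.subspace scale S \<and>
     (\<forall>x\<in>S. \<exists>f. finite {g. f g \<noteq> 0} \<and> (\<forall>g. f g \<in> Lg g \<inter> S) \<and> x = (\<Sum>g\<in>{g. f g \<noteq> 0}. f g))"

definition graded_nary_algebra ::
  "('k::field \<Rightarrow> 'v::ab_group_add \<Rightarrow> 'v) \<Rightarrow> ('g::ab_group_add \<Rightarrow> 'v set) \<Rightarrow> nat \<Rightarrow> ('v list \<Rightarrow> 'v) \<Rightarrow> bool" where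
  "graded_nary_algebra scale Lg n mul \<longleftrightarrow>
     vector_space scale \<and> n \<ge> 2 \<and> is_grading scale Lg \<and>
     (\<forall>xs p a b u w. length xs = n \<and> p < n \<longrightarrow>
        mul (xs[p := scale a u + scale b w]) = scale a (mul (xs[p := u])) + scale b (mul (xs[p := w]))) \<and>
     (\<forall>xs gs. length xs = n \<and> length gs = n \<and> (\<forall>r<n. xs ! r \<in> Lg (gs ! r))
        \<longrightarrow> mul xs \<in> Lg (sum_list gs))"

datatype tag = XT nat | YT nat

fun tagdeg :: "'g list \<Rightarrow> 'g list \<Rightarrow> tag \<Rightarrow> 'g" where
  "tagdeg gx gy (XT r) = gx ! r"
| "tagdeg gx gy (YT r) = gy ! r"

(* order of the arguments on the left-hand side (inner bracket at position k, 0-based) *)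
definition lhs_order :: "nat \<Rightarrow> nat \<Rightarrow> tag list" where
  "lhs_order n k = map YT [0..<k] @ map XT [0..<n] @ map YT [k..<n-1]"

(* order of the arguments in the term indexed by i, j (0-based), sigma1, sigma2 *)
definition rhs_order :: "nat \<Rightarrow> nat \<Rightarrow> nat \<Rightarrow> (nat \<Rightarrow> nat) \<Rightarrow> (nat \<Rightarrow> nat) \<Rightarrow> tag list" where
  "rhs_order n i j s1 s2 =
     map (XT \<circ> s1) [0..<i] @ map (YT \<circ> s2) [0..<j] @ [XT (s1 i)] @ map (YT \<circ> s2) [j..<n-1]
     @ map (XT \<circ> s1) [Suc i..<n]"

definition inv_pairs :: "'a list \<Rightarrow> 'a list \<Rightarrow> ('a \<times> 'a) set" where
  "inv_pairs L R = {(a, b). \<exists>p q. p < q \<and> q < length L \<and> L ! p = a \<and> L ! q = b \<and>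
                     (\<exists>p' q'. q' < p' \<and> p' < length R \<and> R ! p' = a \<and> R ! q' = b)}"

definition color_factor :: "('g \<Rightarrow> 'g \<Rightarrow> 'k::field) \<Rightarrow> ('a \<Rightarrow> 'g) \<Rightarrow> 'a list \<Rightarrow> 'a list \<Rightarrow> 'k" where
  "color_factor eps deg L R = (\<Prod>(a, b)\<in>inv_pairs L R. eps (deg a) (deg b))"

definition perms :: "nat \<Rightarrow> (nat \<Rightarrow> nat) set" where
  "perms m = {s. s permutes {..<m}}"

definition color_gLt_algebra ::
  "('k::field \<Rightarrow> 'v::ab_group_add \<Rightarrow> 'v) \<Rightarrow> ('g::ab_group_add \<Rightarrow> 'v set) \<Rightarrow> ('g \<Rightarrow> 'g \<Rightarrow> 'k)
   \<Rightarrow> nat \<Rightarrow> ('v list \<Rightarrow> 'v) \<Rightarrow> (nat \<Rightarrow> nat \<Rightarrow> nat \<Rightarrow> (nat \<Rightarrow> nat) \<Rightarrow> (nat \<Rightarrow> nat) \<Rightarrow> 'k) \<Rightarrow> bool" where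
  "color_gLt_algebra scale Lg eps n mul alpha \<longleftrightarrow>
     graded_nary_algebra scale Lg n mul \<and>
     (\<forall>k<n. \<forall>xs ys gx gy.
        length xs = n \<and> length ys = n - 1 \<and> length gx = n \<and> length gy = n - 1 \<and>
        (\<forall>r<n. xs ! r \<in> Lg (gx ! r)) \<and> (\<forall>r<n-1. ys ! r \<in> Lg (gy ! r)) \<longrightarrow>
        mul (take k ys @ [mul xs] @ drop k ys) =
          (\<Sum>i<n. \<Sum>j<n. \<Sum>s1\<in>perms n. \<Sum>s2\<in>perms (n - 1).
             scale (alpha i j k s1 s2 *
                    color_factor eps (tagdeg gx gy) (lhs_order n k) (rhs_order n i j s1 s2))
               (mul (map (\<lambda>r. xs ! s1 r) [0..<i]
                      @ [mul (map (\<lambda>r. ys ! s2 r) [0..<j] @ [xs ! s1 i] @ map (\<lambda>r. ys ! s2 r) [j..<n-1])]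
                      @ map (\<lambda>r. xs ! s1 r) [Suc i..<n]))))"

(* <A_1,...,A_n>_sigma : span of all <x_{sigma(1)},...,x_{sigma(n)}> with x_r in A_r (0-based) *)
definition prodS :: "('k::field \<Rightarrow> 'v::ab_group_add \<Rightarrow> 'v) \<Rightarrow> nat \<Rightarrow> ('v list \<Rightarrow> 'v) \<Rightarrow> (nat \<Rightarrow> nat)
                      \<Rightarrow> 'v set list \<Rightarrow> 'v set" where
  "prodS scale n mul s As = module.span scale
     {mul (map (\<lambda>r. xs ! s r) [0..<n]) | xs. length xs = n \<and> (\<forall>r<n. xs ! r \<in> As ! r)}"

definition quasi_mult_basis ::
  "('k::field \<Rightarrow> 'v::ab_group_add \<Rightarrow> 'v) \<Rightarrow> ('g \<Rightarrow> 'v set) \<Rightarrow> nat \<Rightarrow> ('v list \<Rightarrow> 'v)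
   \<Rightarrow> 'v set \<Rightarrow> 'v set \<Rightarrow> ('i \<Rightarrow> 'v) \<Rightarrow> bool" where
  "quasi_mult_basis scale Lg n mul V W e \<longleftrightarrow>
     graded_subspace scale Lg V \<and> graded_subspace scale Lg W \<and>
     V \<noteq> {0} \<and> W \<noteq> {0} \<and> V \<inter> W = {0} \<and> (\<forall>x. \<exists>a\<in>V. \<exists>b\<in>W. x = a + b) \<and>
     inj e \<and> \<not> module.dependent scale (range e) \<and> module.span scale (range e) = W \<and>
     (\<forall>i. \<exists>g. e i \<in> Lg g) \<and>
     (\<forall>ids. length ids = n \<longrightarrow>
        (\<exists>j. mul (map e ids) \<in> module.span scale {e j}) \<or> mul (map e ids) \<in> V) \<and>
     (\<forall>k ids s. 0 < k \<and> k < n \<and> length ids = k \<and> s permutes {..<n} \<longrightarrow>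
        (\<exists>j. prodS scale n mul s (map (\<lambda>i. {e i}) ids @ replicate (n - k) V) \<subseteq> module.span scale {e j})) \<and>
     ((\<exists>j. prodS scale n mul id (replicate n V) \<subseteq> module.span scale {e j}) \<or>
      prodS scale n mul id (replicate n V) \<subseteq> V)"

(* the symbols of I together with v *)
datatype 'i idx = Idx 'i | VV
(* unbarred / barred symbols *)
datatype 'a barred = Pl 'a | Br 'a
(* (n-1)-tuples of unbarred / barred symbols *)
datatype 'a tup = Tup "'a list" | BTup "'a list"

fun tuplen :: "'a tup \<Rightarrow> nat" where
  "tuplen (Tup l) = length l"
| "tuplen (BTup l) = length l"

fun uset :: "'v set \<Rightarrow> ('i \<Rightarrow> 'v) \<Rightarrow> 'i idx \<Rightarrow> 'v set" where
  "uset V e (Idx i) = {e i}"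
| "uset V e VV = V"

definition aS :: "('k::field \<Rightarrow> 'v::ab_group_add \<Rightarrow> 'v) \<Rightarrow> nat \<Rightarrow> ('v list \<Rightarrow> 'v) \<Rightarrow> 'v set \<Rightarrow> ('i \<Rightarrow> 'v)
                  \<Rightarrow> (nat \<Rightarrow> nat) \<Rightarrow> 'i idx list \<Rightarrow> 'i idx set" where
  "aS scale n mul V e s js =
     (let P = prodS scale n mul s (map (uset V e) js) in
       {Idx r | r. P \<noteq> {0} \<and> P \<subseteq> module.span scale {e r}} \<union> (if P \<noteq> {0} \<and> P \<subseteq> V then {VV} else {}))"

definition bS :: "('k::field \<Rightarrow> 'v::ab_group_add \<Rightarrow> 'v) \<Rightarrow> nat \<Rightarrow> ('v list \<Rightarrow> 'v) \<Rightarrow> 'v set \<Rightarrow> ('i \<Rightarrow> 'v)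
                  \<Rightarrow> (nat \<Rightarrow> nat) \<Rightarrow> 'i idx \<Rightarrow> 'i idx list \<Rightarrow> 'i idx set" where
  "bS scale n mul V e s j js = {x. aS scale n mul V e s (x # js) = {j}}"

fun muS :: "('k::field \<Rightarrow> 'v::ab_group_add \<Rightarrow> 'v) \<Rightarrow> nat \<Rightarrow> ('v list \<Rightarrow> 'v) \<Rightarrow> 'v set \<Rightarrow> ('i \<Rightarrow> 'v)
            \<Rightarrow> 'i idx barred \<Rightarrow> 'i idx tup \<Rightarrow> 'i idx set" where
  "muS scale n mul V e (Pl j) (Tup js) = (\<Union>s\<in>perms n. aS scale n mul V e s (j # js))"
| "muS scale n mul V e (Pl j) (BTup js) = (\<Union>s\<in>perms n. bS scale n mul V e s j js)"
| "muS scale n mul V e (Br j) (Tup js) =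
     (\<Union>k<n-1. \<Union>s\<in>perms n. bS scale n mul V e s (js ! k) (j # take k js @ drop (Suc k) js))"
| "muS scale n mul V e (Br j) (BTup js) = {}"

definition phiS :: "('k::field \<Rightarrow> 'v::ab_group_add \<Rightarrow> 'v) \<Rightarrow> nat \<Rightarrow> ('v list \<Rightarrow> 'v) \<Rightarrow> 'v set \<Rightarrow> ('i \<Rightarrow> 'v)
                    \<Rightarrow> 'i barred set \<Rightarrow> 'i idx tup \<Rightarrow> 'i barred set" where
  "phiS scale n mul V e J X =
     (if J = {} then {}
      else (let K = {i. \<exists>jj\<in>J. Idx i \<in> muS scale n mul V e (map_barred Idx jj) X} in Pl ` K \<union> Br ` K))"

fun phi_iter :: "('k::field \<Rightarrow> 'v::ab_group_add \<Rightarrow> 'v) \<Rightarrow> nat \<Rightarrow> ('v list \<Rightarrow> 'v) \<Rightarrow> 'v set \<Rightarrow> ('i \<Rightarrow> 'v)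
                 \<Rightarrow> 'i barred set \<Rightarrow> 'i idx tup list \<Rightarrow> 'i barred set" where
  "phi_iter scale n mul V e J [] = J"
| "phi_iter scale n mul V e J (X # Xs) = phi_iter scale n mul V e (phiS scale n mul V e J X) Xs"

definition connected :: "('k::field \<Rightarrow> 'v::ab_group_add \<Rightarrow> 'v) \<Rightarrow> nat \<Rightarrow> ('v list \<Rightarrow> 'v) \<Rightarrow> 'v set \<Rightarrow> ('i \<Rightarrow> 'v)
                         \<Rightarrow> 'i \<Rightarrow> 'i \<Rightarrow> bool" where
  "connected scale n mul V e i j \<longleftrightarrow>
     i = j \<or>
     (\<exists>Xs it. Xs \<noteq> [] \<and> (\<forall>X\<in>set Xs. tuplen X = n - 1) \<and> it \<in> {Pl i, Br i} \<and>
        (\<forall>s. 1 \<le> s \<and> s < length Xs \<longrightarrow> phi_iter scale n mul V e {it} (take s Xs) \<noteq> {}) \<and>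
        Pl j \<in> phi_iter scale n mul V e {it} Xs)"

end

theory Submission
  imports Defs
begin

lemma span_single_disj:
  assumes vs: "vector_space scale"
    and ind: "\<not> module.dependent scale (range e)" and inj: "inj e"
    and ne: "r \<noteq> r'"
    and x1: "x \<in> module.span scale {e r}" and x2: "x \<in> module.span scale {e r'}"
  shows "x = 0"
proof -
  interpret vector_space scale by (rule vs)
  obtain a where a: "x = scale a (e r)" using x1 span_singleton by auto
  obtain b where b: "x = scale b (e r')" using x2 span_singleton by auto
  show ?thesis
  proof (rule ccontr)
    assume "x \<noteq> 0"
    then have "a \<noteq> 0" using a by auto
    have "e r = scale (inverse a * b) (e r')"
      using a b \<open>a \<noteq> 0\<close> by (metis scale_scale scale_one left_inverse)
    moreover have "e r' \<in> range e - {e r}" using inj ne by (auto dest: injD)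
    ultimately have "e r \<in> span (range e - {e r})"
      by (metis span_base span_scale)
    then have "dependent (range e)" unfolding dependent_def by auto
    then show False using ind by simp
  qed
qed

lemma aS_unique:
  assumes vs: "vector_space scale"
    and q: "quasi_mult_basis scale Lg n mul V W e"
    and x: "x \<in> aS scale n mul V e s L" and y: "y \<in> aS scale n mul V e s L"
  shows "x = y"
proof -
  interpret vector_space scale by (rule vs)
  define P where "P = prodS scale n mul s (map (uset V e) L)"
  have P0: "0 \<in> P" unfolding P_def prodS_def by (rule span_zero)
  have ind: "\<not> dependent (range e)" and inj: "inj e" and W: "span (range e) = W"
    and VW: "V \<inter> W = {0}"
    using q unfolding quasi_mult_basis_def by auto
  have sW: "span {e r} \<subseteq> W" for r using W span_mono[of "{e r}" "range e"] by auto
  have nz: "\<exists>p\<in>P. p \<noteq> 0" if "P \<noteq> {0}" using that P0 by blast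
  show ?thesis
  proof (cases x)
    case (Idx r)
    then have hx: "P \<noteq> {0}" "P \<subseteq> span {e r}" using x unfolding aS_def P_def Let_def
      by (auto split: if_splits)
    then obtain p where p: "p \<in> P" "p \<noteq> 0" using nz by blast
    show ?thesis
    proof (cases y)
      case (Idx r')
      then have "P \<subseteq> span {e r'}" using y unfolding aS_def P_def Let_def
        by (auto split: if_splits)
      then have "r = r'" using span_single_disj[OF vs ind inj, of r r' p] p hx by blast
      then show ?thesis using Idx \<open>x = Idx r\<close> by simp
    next
      case VV
      then have "P \<subseteq> V" using y unfolding aS_def P_def Let_def
        by (auto split: if_splits)
      then have False using p hx sW VW by blast
      then show ?thesis ..
    qed
  next
    case VV
    then have hx: "P \<noteq> {0}" "P \<subseteq> V" using x unfolding aS_def P_def Let_def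
      by (auto split: if_splits)
    then obtain p where p: "p \<in> P" "p \<noteq> 0" using nz by blast
    show ?thesis
    proof (cases y)
      case (Idx r')
      then have "P \<subseteq> span {e r'}" using y unfolding aS_def P_def Let_def
        by (auto split: if_splits)
      then have False using p hx sW VW by blast
      then show ?thesis ..
    next
      case VV
      then show ?thesis using \<open>x = VV\<close> by simp
    qed
  qed
qed

lemma prodS_swap:
  assumes n: "2 \<le> n" and s: "s permutes {..<n}"
  shows "prodS scale n mul (transpose 0 1 \<circ> s) (map f (b # a # rest))
       = prodS scale n mul s (map f (a # b # rest))"
proof -
  let ?t = "transpose (0::nat) 1"
  have tp: "?t permutes {..<n}" using n by (intro permutes_swap_id) auto
  have tt: "?t (?t q) = q" for q by (simp add: transpose_def)
  have nth: "(map f (b # a # rest)) ! q = (map f (a # b # rest)) ! (?t q)" for q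
  proof (cases q)
    case (Suc m) then show ?thesis by (cases m) (auto simp: transpose_def)
  qed (simp add: transpose_def)
  have tin: "?t q < n" if "q < n" for q using tp that permutes_in_image[OF tp] by auto
  have sin: "s q < n" if "q < n" for q using that permutes_in_image[OF s] by auto
  show ?thesis unfolding prodS_def
  proof (rule arg_cong[where f = "module.span scale"])
    show "{mul (map (\<lambda>r. xs ! (?t \<circ> s) r) [0..<n]) |xs.
            length xs = n \<and> (\<forall>r<n. xs ! r \<in> map f (b # a # rest) ! r)} =
          {mul (map (\<lambda>r. xs ! s r) [0..<n]) |xs.
            length xs = n \<and> (\<forall>r<n. xs ! r \<in> map f (a # b # rest) ! r)}"
    proof (intro set_eqI iffI)
      fix z assume "z \<in> {mul (map (\<lambda>r. xs ! (?t \<circ> s) r) [0..<n]) |xs.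
            length xs = n \<and> (\<forall>r<n. xs ! r \<in> map f (b # a # rest) ! r)}"
      then obtain xs where z: "z = mul (map (\<lambda>r. xs ! (?t \<circ> s) r) [0..<n])"
        and l: "length xs = n" and h: "\<forall>r<n. xs ! r \<in> map f (b # a # rest) ! r" by blast
      define ys where "ys = map (\<lambda>q. xs ! ?t q) [0..<n]"
      have "length ys = n" unfolding ys_def by simp
      moreover have "\<forall>r<n. ys ! r \<in> map f (a # b # rest) ! r"
      proof (intro allI impI)
        fix r assume r: "r < n"
        have "ys ! r = xs ! ?t r" unfolding ys_def using r by simp
        also have "\<dots> \<in> map f (b # a # rest) ! ?t r" using h tin r by blast
        also have "\<dots> = map f (a # b # rest) ! r" using nth[of "?t r"] tt by simp
        finally show "ys ! r \<in> map f (a # b # rest) ! r" .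
      qed
      moreover have "z = mul (map (\<lambda>r. ys ! s r) [0..<n])"
        unfolding z ys_def by (intro arg_cong[where f=mul] map_cong) (auto simp: sin)
      ultimately show "z \<in> {mul (map (\<lambda>r. xs ! s r) [0..<n]) |xs.
            length xs = n \<and> (\<forall>r<n. xs ! r \<in> map f (a # b # rest) ! r)}" by blast
    next
      fix z assume "z \<in> {mul (map (\<lambda>r. xs ! s r) [0..<n]) |xs.
            length xs = n \<and> (\<forall>r<n. xs ! r \<in> map f (a # b # rest) ! r)}"
      then obtain xs where z: "z = mul (map (\<lambda>r. xs ! s r) [0..<n])"
        and l: "length xs = n" and h: "\<forall>r<n. xs ! r \<in> map f (a # b # rest) ! r" by blast
      define ys where "ys = map (\<lambda>q. xs ! ?t q) [0..<n]"
      have "length ys = n" unfolding ys_def by simp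
      moreover have "\<forall>r<n. ys ! r \<in> map f (b # a # rest) ! r"
      proof (intro allI impI)
        fix r assume r: "r < n"
        have "ys ! r = xs ! ?t r" unfolding ys_def using r by simp
        also have "\<dots> \<in> map f (a # b # rest) ! ?t r" using h tin r by blast
        also have "\<dots> = map f (b # a # rest) ! r" using nth[of r] by simp
        finally show "ys ! r \<in> map f (b # a # rest) ! r" .
      qed
      moreover have "z = mul (map (\<lambda>r. ys ! (?t \<circ> s) r) [0..<n])"
        unfolding z ys_def
      proof (intro arg_cong[where f=mul] map_cong refl)
        fix x assume "x \<in> set [0..<n]"
        then have "?t (s x) < n" using sin tin by auto
        then show "xs ! s x = map (\<lambda>q. xs ! ?t q) [0..<n] ! (?t \<circ> s) x"
          using tt[of "s x"] by simp
      qed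
      ultimately show "z \<in> {mul (map (\<lambda>r. xs ! (?t \<circ> s) r) [0..<n]) |xs.
            length xs = n \<and> (\<forall>r<n. xs ! r \<in> map f (b # a # rest) ! r)}" by blast
    qed
  qed
qed

fun ub :: "'a barred \<Rightarrow> 'a" where
  "ub (Pl x) = x" | "ub (Br x) = x"

lemma phiS_mem:
  "y \<in> phiS scale n mul V e J X \<longleftrightarrow> (\<exists>jj\<in>J. Idx (ub y) \<in> muS scale n mul V e (map_barred Idx jj) X)"
  unfolding phiS_def Let_def by (cases y) auto

definition stepR where
  "stepR scale n mul V e r r' \<longleftrightarrow> (\<exists>X jj. tuplen X = n - 1 \<and> jj \<in> {Pl r, Br r} \<and>
      Idx r' \<in> muS scale n mul V e (map_barred Idx jj) X)"

lemma phi_iter_snoc: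
  "phi_iter scale n mul V e J (Xs @ [X]) = phiS scale n mul V e (phi_iter scale n mul V e J Xs) X"
  by (induction Xs arbitrary: J) auto

lemma phi_back:
  assumes "\<forall>X\<in>set Xs. tuplen X = n - 1" and "x \<in> phi_iter scale n mul V e J Xs"
  shows "\<exists>y\<in>J. (stepR scale n mul V e)\<^sup>*\<^sup>* (ub y) (ub x)"
  using assms
proof (induction Xs arbitrary: J)
  case Nil
  then show ?case by auto
next
  case (Cons X Xs)
  then obtain y where y: "y \<in> phiS scale n mul V e J X"
    and r: "(stepR scale n mul V e)\<^sup>*\<^sup>* (ub y) (ub x)" by auto
  then obtain jj where jj: "jj \<in> J" "Idx (ub y) \<in> muS scale n mul V e (map_barred Idx jj) X"
    using phiS_mem by metis
  have "stepR scale n mul V e (ub jj) (ub y)"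
    unfolding stepR_def using jj Cons.prems(1)
    by (intro exI[of _ X] exI[of _ jj]) (cases jj; auto)
  then show ?case using jj r by (meson converse_rtranclp_into_rtranclp)
qed

lemma forward:
  assumes "(stepR scale n mul V e)\<^sup>+\<^sup>+ i j"
  shows "\<exists>Xs it. Xs \<noteq> [] \<and> (\<forall>X\<in>set Xs. tuplen X = n - 1) \<and> it \<in> {Pl i, Br i} \<and>
     (\<forall>s. 1 \<le> s \<and> s \<le> length Xs \<longrightarrow> phi_iter scale n mul V e {it} (take s Xs) \<noteq> {}) \<and>
     Pl j \<in> phi_iter scale n mul V e {it} Xs \<and> Br j \<in> phi_iter scale n mul V e {it} Xs"
  using assms
proof (induction rule: tranclp_induct)
  case (base j)
  then obtain X jj where X: "tuplen X = n - 1" "jj \<in> {Pl i, Br i}"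
      "Idx j \<in> muS scale n mul V e (map_barred Idx jj) X" unfolding stepR_def by blast
  have "Pl j \<in> phiS scale n mul V e {jj} X" "Br j \<in> phiS scale n mul V e {jj} X"
    using X by (auto simp: phiS_mem)
  then show ?case using X
    by (intro exI[of _ "[X]"] exI[of _ jj]) (auto simp: le_Suc_eq)
next
  case (step j k)
  then obtain Xs it where IH: "Xs \<noteq> []" "\<forall>X\<in>set Xs. tuplen X = n - 1" "it \<in> {Pl i, Br i}"
     "\<forall>s. 1 \<le> s \<and> s \<le> length Xs \<longrightarrow> phi_iter scale n mul V e {it} (take s Xs) \<noteq> {}"
     "Pl j \<in> phi_iter scale n mul V e {it} Xs" "Br j \<in> phi_iter scale n mul V e {it} Xs" by blast
  obtain X jj where X: "tuplen X = n - 1" "jj \<in> {Pl j, Br j}"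
      "Idx k \<in> muS scale n mul V e (map_barred Idx jj) X" using step(2) unfolding stepR_def by blast
  have jj: "jj \<in> phi_iter scale n mul V e {it} Xs" using X(2) IH by auto
  have k: "Pl k \<in> phi_iter scale n mul V e {it} (Xs @ [X])" "Br k \<in> phi_iter scale n mul V e {it} (Xs @ [X])"
    unfolding phi_iter_snoc phiS_mem using jj X by auto
  have ne: "phi_iter scale n mul V e {it} (take s (Xs @ [X])) \<noteq> {}"
    if "1 \<le> s" "s \<le> length (Xs @ [X])" for s
  proof (cases "s \<le> length Xs")
    case True then show ?thesis using IH(4) that by auto
  next
    case False then have "s = length (Xs @ [X])" using that by auto
    then show ?thesis using k by auto
  qed
  show ?case
    by (rule exI[of _ "Xs @ [X]"], rule exI[of _ it]) (use IH X k ne in auto)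
qed

lemma aS_swap:
  assumes n: "2 \<le> n" and s: "s permutes {..<n}"
  shows "aS scale n mul V e (transpose 0 1 \<circ> s) (b # a # rest) = aS scale n mul V e s (a # b # rest)"
  unfolding aS_def using prodS_swap[OF n s, of scale mul "uset V e" b a rest] by simp

lemma step_sym:
  assumes vs: "vector_space scale" and q: "quasi_mult_basis scale Lg n mul V W e"
    and n: "2 \<le> n" and st: "stepR scale n mul V e r r'"
  shows "stepR scale n mul V e r' r"
proof -
  obtain X jj where X: "tuplen X = n - 1" "jj \<in> {Pl r, Br r}"
      "Idx r' \<in> muS scale n mul V e (map_barred Idx jj) X" using st unfolding stepR_def by blast
  show ?thesis
  proof (cases X)
    case (Tup js)
    show ?thesis
    proof (cases "jj = Pl r")
      case True
      then obtain s where s: "s \<in> perms n" "Idx r' \<in> aS scale n mul V e s (Idx r # js)"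
        using X Tup by auto
      have "aS scale n mul V e s (Idx r # js) = {Idx r'}"
        using s aS_unique[OF vs q] by blast
      then have "Idx r \<in> muS scale n mul V e (map_barred Idx (Pl r')) (BTup js)"
        using s by (auto simp: bS_def)
      then show ?thesis unfolding stepR_def using X Tup
        by (intro exI[of _ "BTup js"] exI[of _ "Pl r'"]) auto
    next
      case False
      then have jj: "jj = Br r" using X by auto
      then obtain k s where ks: "k < n - 1" "s \<in> perms n"
        "Idx r' \<in> bS scale n mul V e s (js ! k) (Idx r # take k js @ drop (Suc k) js)"
        using X Tup by auto
      have sp: "s permutes {..<n}" using ks perms_def by auto
      have s': "transpose 0 1 \<circ> s \<in> perms n" unfolding perms_def
        using permutes_compose[OF sp permutes_swap_id[of 0 "{..<n}" 1]] n by auto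
      have "Idx r \<in> bS scale n mul V e (transpose 0 1 \<circ> s) (js ! k) (Idx r' # take k js @ drop (Suc k) js)"
        using ks aS_swap[OF n sp, of scale mul V e "Idx r" "Idx r'" "take k js @ drop (Suc k) js"]
        by (simp add: bS_def)
      then have "Idx r \<in> muS scale n mul V e (map_barred Idx (Br r')) (Tup js)"
        using ks s' by auto
      then show ?thesis unfolding stepR_def using X Tup
        by (intro exI[of _ "Tup js"] exI[of _ "Br r'"]) auto
    qed
  next
    case (BTup js)
    then have jj: "jj = Pl r" using X by auto
    then obtain s where s: "s \<in> perms n" "Idx r' \<in> bS scale n mul V e s (Idx r) js"
      using X BTup by auto
    then have "Idx r \<in> muS scale n mul V e (map_barred Idx (Pl r')) (Tup js)"
      by (auto simp: bS_def)
    then show ?thesis unfolding stepR_def using X BTup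
      by (intro exI[of _ "Tup js"] exI[of _ "Pl r'"]) auto
  qed
qed

theorem proposition3p5:
  fixes scale :: "'k::field \<Rightarrow> 'v::ab_group_add \<Rightarrow> 'v"
    and Lg :: "'g::ab_group_add \<Rightarrow> 'v set"
    and eps :: "'g \<Rightarrow> 'g \<Rightarrow> 'k"
    and n :: nat
    and mul :: "'v list \<Rightarrow> 'v"
    and alpha :: "nat \<Rightarrow> nat \<Rightarrow> nat \<Rightarrow> (nat \<Rightarrow> nat) \<Rightarrow> (nat \<Rightarrow> nat) \<Rightarrow> 'k"
    and V W :: "'v set"
    and e :: "'i \<Rightarrow> 'v"
  assumes "bicharacter eps"
    and "color_gLt_algebra scale Lg eps n mul alpha"
    and "quasi_mult_basis scale Lg n mul V W e"
  shows "equivp (connected scale n mul V e)"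
proof -
  have vs: "vector_space scale" and n: "2 \<le> n"
    using assms(2) unfolding color_gLt_algebra_def graded_nary_algebra_def by auto
  let ?R = "stepR scale n mul V e"
  have eq: "connected scale n mul V e i j \<longleftrightarrow> ?R\<^sup>*\<^sup>* i j" for i j
  proof
    assume "connected scale n mul V e i j"
    then show "?R\<^sup>*\<^sup>* i j"
    proof (unfold connected_def, elim disjE exE conjE)
      fix Xs it
      assume "\<forall>X\<in>set Xs. tuplen X = n - 1" "it \<in> {Pl i, Br i}"
        "Pl j \<in> phi_iter scale n mul V e {it} Xs"
      then show "?R\<^sup>*\<^sup>* i j" using phi_back[where Xs=Xs and x="Pl j" and J="{it}" and n=n and scale=scale and mul=mul and V=V and e=e] by auto
    qed simp
  next
    assume "?R\<^sup>*\<^sup>* i j"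
    then have "i = j \<or> ?R\<^sup>+\<^sup>+ i j" by (meson rtranclpD)
    then show "connected scale n mul V e i j"
      unfolding connected_def using forward[of scale n mul V e i j] by (metis le_refl less_imp_le_nat)
  qed
  have sR: "symp ?R" using step_sym[OF vs assms(3) n] by (auto intro: sympI)
  show ?thesis
    unfolding eq[abs_def]
    by (intro equivpI reflpI sympI transpI)
       (auto dest: sympD[OF symp_rtranclp[OF sR]] intro: rtranclp_trans)
qed

end
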